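(* Let $H$ be a finite simple undirected graph on $n\ge 2$ vertices, and let $\lambda_1(H)\ge\cdots\ge\lambda_n(H)$ be the eigenvalues of its adjacency matrix. Then \[ \lambda_{n-1}(H)\ge -\frac{n}{3}. \] *)

theory Defs
  imports "Jordan_Normal_Form.Char_Poly"
begin

text \<open>A finite simple undirected graph on vertex set {0..<n}: symmetric, irreflexive
  adjacency relation E (values outside {0..<n} are irrelevant).\<close>
definition simple_graph :: "nat \<Rightarrow> (nat \<Rightarrow> nat \<Rightarrow> bool) \<Rightarrow> bool" where
  "simple_graph n E \<longleftrightarrow> (\<forall>i<n. \<forall>j<n. E i j \<longleftrightarrow> E j i) \<and> (\<forall>i<n. \<not> E i i)"

definition adj_matrix :: "nat \<Rightarrow> (nat \<Rightarrow> nat \<Rightarrow> bool) \<Rightarrow> real mat" where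
  "adj_matrix n E = mat n n (\<lambda>(i, j). if E i j then 1 else 0)"

text \<open>es lists the eigenvalues of A (with algebraic multiplicity) in non-increasing order:
  es ! 0 \<ge> es ! 1 \<ge> ... , i.e. es ! (k-1) = lambda_k.\<close>
definition ordered_eigenvalues :: "real mat \<Rightarrow> real list \<Rightarrow> bool" where
  "ordered_eigenvalues A es \<longleftrightarrow>
     length es = dim_row A \<and> sorted_wrt (\<ge>) es \<and>
     char_poly A = (\<Prod>e\<leftarrow>es. [:- e, 1:])"

end

theory Submission
  imports Defs "Jordan_Normal_Form.Schur_Decomposition"
begin

lemma wcauchy:
  fixes c v :: "nat \<Rightarrow> real"
  assumes "finite I" "\<And>i. i \<in> I \<Longrightarrow> 0 \<le> c i"
  shows "(\<Sum>i\<in>I. c i * v i)^2 \<le> (\<Sum>i\<in>I. c i) * (\<Sum>i\<in>I. c i * (v i)^2)"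
proof -
  have "0 \<le> (\<Sum>i\<in>I. \<Sum>j\<in>I. c i * c j * (v i - v j)^2)"
    using assms by (intro sum_nonneg) auto
  also have "\<dots> = (\<Sum>i\<in>I. \<Sum>j\<in>I. (c i * (v i)^2) * c j + c i * (c j * (v j)^2) - 2 * ((c i * v i) * (c j * v j)))"
    by (intro sum.cong refl) (simp add: power2_eq_square algebra_simps)
  also have "\<dots> = (\<Sum>i\<in>I. \<Sum>j\<in>I. (c i * (v i)^2) * c j) + (\<Sum>i\<in>I. \<Sum>j\<in>I. c i * (c j * (v j)^2))
       - 2 * (\<Sum>i\<in>I. \<Sum>j\<in>I. (c i * v i) * (c j * v j))"
    by (simp only: sum.distrib sum_subtractf sum_distrib_left)
  also have "\<dots> = 2 * ((\<Sum>i\<in>I. c i) * (\<Sum>i\<in>I. c i * (v i)^2) - (\<Sum>i\<in>I. c i * v i)^2)"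
    by (simp only: sum_product[symmetric] power2_eq_square) (simp add: algebra_simps)
  finally show ?thesis by simp
qed
lemma pt_ineq:
  fixes z :: complex
  assumes "z \<noteq> 0"
  shows "\<bar>Re z\<bar> \<le> 2/3 * cmod z + 7/18 * Re (z^2) / cmod z - 1/18 * Re (z^4) / cmod z ^ 3"
proof -
  obtain p q where z: "z = Complex p q" by (cases z)
  define \<rho> where "\<rho> = cmod z"
  have \<rho>pos: "\<rho> > 0" using assms by (simp add: \<rho>_def)
  have \<rho>2: "\<rho>^2 = p^2 + q^2" by (simp add: \<rho>_def z cmod_def)
  have q2: "q^2 = \<rho>^2 - p^2" using \<rho>2 by simp
  have re2: "Re (z^2) = p^2 - q^2" by (simp add: z power2_eq_square)
  have re4: "Re (z^4) = p^4 - 6*p^2*q^2 + q^4"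
  proof -
    have "z^4 = (z^2)^2" by simp
    thus ?thesis by (simp add: z power2_eq_square power4_eq_xxxx algebra_simps)
  qed
  define P where "P = \<bar>p\<bar>"
  have P0: "0 \<le> P" by (simp add: P_def)
  have Pr: "P \<le> \<rho>"
  proof -
    have "P^2 \<le> \<rho>^2" using \<rho>2 by (simp add: P_def)
    thus ?thesis using \<rho>pos P0 by (simp add: abs_le_square_iff[symmetric]  power2_le_iff_abs_le)
  qed
  have pP: "p^2 = P^2" by (simp add: P_def)
  have fac: "(P - \<rho>) * (2*P - \<rho>)^2 * (P + 2*\<rho>) \<le> 0"
    using Pr P0 \<rho>pos by (intro mult_nonpos_nonneg mult_nonpos_nonneg) auto
  have key: "18 * P * \<rho>^3 \<le> 4*\<rho>^4 + 22*P^2*\<rho>^2 - 8*P^4"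
    using fac by (simp add: power2_eq_square power3_eq_cube power4_eq_xxxx algebra_simps)
  have q4: "q^4 = (q^2)^2" by simp
  have p4: "p^4 = (p^2)^2" by simp
  have re4': "Re (z^4) = P^4 - 6*P^2*(\<rho>^2-P^2) + (\<rho>^2-P^2)^2"
    unfolding re4 q4 p4 q2 pP by simp
  have re2': "Re (z^2) = P^2 - (\<rho>^2 - P^2)" unfolding re2 q2 pP by simp
  have rhs: "2/3 * \<rho> + 7/18 * Re (z^2) / \<rho> - 1/18 * Re (z^4) / \<rho> ^ 3
     = (4*\<rho>^4 + 22*P^2*\<rho>^2 - 8*P^4) / (18 * \<rho>^3)"
    using \<rho>pos unfolding re2' re4'
    by (simp add: field_simps power2_eq_square power3_eq_cube power4_eq_xxxx)
  have "\<bar>Re z\<bar> = 18 * P * \<rho>^3 / (18 * \<rho>^3)" using \<rho>pos by (simp add: P_def z)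
  also have "\<dots> \<le> (4*\<rho>^4 + 22*P^2*\<rho>^2 - 8*P^4) / (18 * \<rho>^3)"
    using key \<rho>pos by (intro divide_right_mono) auto
  finally show ?thesis using rhs by (simp add: \<rho>_def)
qed

lemma fin_arith:
  fixes a m s b k :: real
  assumes "a \<le> m" "a = (s - b) / 2" "0 \<le> s" "b \<le> 4 * k / 3"
  shows "- 2 * k / 3 \<le> m"
proof -
  have "2 * a = s - b" using assms(2) by simp
  moreover have "3 * b \<le> 4 * k" using assms(4) by simp
  ultimately have "- 2 * k \<le> 3 * a" using assms(3) by linarith
  then show ?thesis using assms(1) by linarith
qed

lemma key2:
  fixes x y :: "nat \<Rightarrow> real" and M :: "nat \<Rightarrow> nat \<Rightarrow> real"
  assumes M0: "\<And>i j. 0 \<le> M i j" and M1: "\<And>i j. M i j \<le> 1"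
    and nx: "(\<Sum>i<n. x i^2) = 1" and ny: "(\<Sum>i<n. y i^2) = 1" and nxy: "(\<Sum>i<n. x i * y i) = 0"
  shows "- 2 * real n / 3 \<le> (\<Sum>i<n. \<Sum>j<n. M i j * (x i * x j + y i * y j))"
proof -
  define w where "w i = Complex (x i) (y i)" for i
  define r where "r i = cmod (w i)" for i
  define a where "a i = (if r i = 0 then 0 else (w i)^2 / complex_of_real (r i))" for i
  define b where "b i = (if r i = 0 then 0 else (w i)^4 / complex_of_real (r i ^ 3))" for i
  define t where "t i j = x i * x j + y i * y j" for i j
  have r0: "0 \<le> r i" for i by (simp add: r_def)
  have rw0: "r i = 0 \<longleftrightarrow> w i = 0" for i by (simp add: r_def)
  have tw: "t i j = Re (w i * cnj (w j))" for i j by (simp add: t_def w_def)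
  have pt: "\<bar>t i j\<bar> \<le> 2/3 * (r i * r j) + 7/18 * Re (a i * cnj (a j)) - 1/18 * Re (b i * cnj (b j))" for i j
  proof (cases "r i = 0 \<or> r j = 0")
    case True
    then show ?thesis by (auto simp: tw a_def b_def rw0 r0 intro!: mult_nonneg_nonneg)
  next
    case False
    define z where "z = w i * cnj (w j)"
    have z0: "z \<noteq> 0" using False by (simp add: z_def rw0)
    have cz: "cmod z = r i * r j" by (simp add: z_def r_def norm_mult)
    have az': "a i * cnj (a j) = z^2 / complex_of_real (r i * r j)"
      using False by (simp add: a_def z_def field_simps power2_eq_square)
    have bz': "b i * cnj (b j) = z^4 / complex_of_real ((r i * r j) ^ 3)"
      using False by (simp add: b_def z_def field_simps power_mult_distrib)
    have az: "a i * cnj (a j) = z^2 / complex_of_real (cmod z)" unfolding az' cz ..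
    have bz: "b i * cnj (b j) = z^4 / complex_of_real (cmod z ^ 3)" unfolding bz' cz ..
    have "\<bar>t i j\<bar> = \<bar>Re z\<bar>" by (simp add: tw z_def)
    also have "\<dots> \<le> 2/3 * cmod z + 7/18 * Re (z^2) / cmod z - 1/18 * Re (z^4) / cmod z ^ 3"
      by (rule pt_ineq[OF z0])
    also have "\<dots> = 2/3 * (r i * r j) + 7/18 * Re (a i * cnj (a j)) - 1/18 * Re (b i * cnj (b j))"
      unfolding az bz cz by (simp add: Re_divide_of_real)
    finally show ?thesis .
  qed
  have step1: "(t i j - \<bar>t i j\<bar>) / 2 \<le> M i j * t i j" for i j
  proof (cases "t i j \<ge> 0")
    case True then show ?thesis using M0[of i j] by simp
  next
    case False
    have "(1 - M i j) * (- t i j) \<ge> 0" using M1[of i j] False by (intro mult_nonneg_nonneg) auto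
    then show ?thesis using False by (simp add: algebra_simps)
  qed
  define R where "R = (\<Sum>i<n. r i)"
  define S where "S = (\<Sum>i<n. a i)"
  define T where "T = (\<Sum>i<n. b i)"
  have sumt: "(\<Sum>i<n. \<Sum>j<n. t i j) = (\<Sum>i<n. x i)^2 + (\<Sum>i<n. y i)^2"
    by (simp add: t_def sum.distrib power2_eq_square sum_product)
  have sumcnj: "(\<Sum>i<n. \<Sum>j<n. Re (f i * cnj (f j))) = (cmod (\<Sum>i<n. f i))^2" for f :: "nat \<Rightarrow> complex"
  proof -
    have "(\<Sum>i<n. \<Sum>j<n. Re (f i * cnj (f j))) = Re ((\<Sum>i<n. f i) * cnj (\<Sum>i<n. f i))"
      by (simp add: sum_product cnj_sum)
    also have "\<dots> = (cmod (\<Sum>i<n. f i))^2"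
      by (simp only: complex_norm_square[symmetric] Re_complex_of_real)
    finally show ?thesis .
  qed
  have sumabs: "(\<Sum>i<n. \<Sum>j<n. \<bar>t i j\<bar>) \<le> 2/3 * R^2 + 7/18 * (cmod S)^2 - 1/18 * (cmod T)^2"
  proof -
    have "(\<Sum>i<n. \<Sum>j<n. \<bar>t i j\<bar>) \<le> (\<Sum>i<n. \<Sum>j<n. 2/3 * (r i * r j) + 7/18 * Re (a i * cnj (a j)) - 1/18 * Re (b i * cnj (b j)))"
      by (intro sum_mono pt)
    also have "\<dots> = 2/3 * (\<Sum>i<n. \<Sum>j<n. r i * r j) + 7/18 * (\<Sum>i<n. \<Sum>j<n. Re (a i * cnj (a j)))
        - 1/18 * (\<Sum>i<n. \<Sum>j<n. Re (b i * cnj (b j)))"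
      by (simp only: sum.distrib sum_subtractf sum_distrib_left)
    also have "\<dots> = 2/3 * R^2 + 7/18 * (cmod S)^2 - 1/18 * (cmod T)^2"
      unfolding sumcnj R_def S_def T_def by (simp add: power2_eq_square sum_product)
    finally show ?thesis .
  qed
  have r2: "(r i)^2 = x i^2 + y i^2" for i by (simp add: r_def w_def cmod_power2)
  have sumr2: "(\<Sum>i<n. (r i)^2) = 2" using nx ny by (simp add: r2 sum.distrib)
  have raw: "complex_of_real (r i) * a i = (w i)^2" for i
    by (cases "r i = 0") (auto simp: a_def rw0)
  have sumw2: "(\<Sum>i<n. (w i)^2) = 0"
  proof (rule complex_eqI)
    have "Re (\<Sum>i<n. (w i)^2) = (\<Sum>i<n. x i^2) - (\<Sum>i<n. y i^2)"
      by (simp add: Re_sum w_def power2_eq_square sum_subtractf)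
    then show "Re (\<Sum>i<n. (w i)^2) = Re 0" using nx ny by simp
    have "Im (\<Sum>i<n. (w i)^2) = 2 * (\<Sum>i<n. x i * y i)"
      by (simp add: Im_sum w_def power2_eq_square sum_distrib_left)
    then show "Im (\<Sum>i<n. (w i)^2) = Im 0" using nxy by simp
  qed
  have cmoda: "cmod (a i) = r i" for i
    by (cases "r i = 0") (auto simp: a_def norm_divide norm_power r_def norm_mult power2_eq_square)
  define e where "e = (if S = 0 then 1 else S / complex_of_real (cmod S))"
  have e1: "cmod e = 1" by (simp add: e_def norm_divide)
  have eS: "Re (cnj e * S) = cmod S"
  proof (cases "S = 0")
    case True then show ?thesis by simp
  next
    case False
    have "cnj e * S = (S * cnj S) / complex_of_real (cmod S)" using False by (simp add: e_def)
    also have "S * cnj S = complex_of_real ((cmod S)^2)" by (rule complex_norm_square[symmetric])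
    finally have "cnj e * S = complex_of_real ((cmod S)^2 / cmod S)" by simp
    then show ?thesis using False by (simp add: power2_eq_square)
  qed
  define p where "p i = (if r i = 0 then 0 else Re (cnj e * a i) / r i)" for i
  have a0: "r i = 0 \<Longrightarrow> a i = 0" for i by (simp add: a_def)
  have rp: "r i * p i = Re (cnj e * a i)" for i
    by (cases "r i = 0") (simp_all add: p_def a0)
  have pabs: "\<bar>p i\<bar> \<le> 1" for i
  proof (cases "r i = 0")
    case True then show ?thesis by (simp add: p_def)
  next
    case False
    have hr: "0 < r i" using False r0[of i] by simp
    have "\<bar>Re (cnj e * a i)\<bar> \<le> cmod (cnj e * a i)" by (rule abs_Re_le_cmod)
    also have "\<dots> = r i" by (simp only: norm_mult complex_mod_cnj e1 cmoda mult_1)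
    finally have bd: "\<bar>Re (cnj e * a i)\<bar> \<le> r i" .
    have "\<bar>p i\<bar> = \<bar>Re (cnj e * a i)\<bar> / r i" using False hr by (simp add: p_def abs_divide)
    also have "\<dots> \<le> 1" using bd hr by (simp add: divide_le_eq_1)
    finally show ?thesis .
  qed
  have pb1: "0 \<le> 1 + p i" and pb2: "0 \<le> 1 - p i" and pb3: "p i \<le> 1" for i using pabs[of i] by (simp_all add: abs_le_iff)
  have sum_rp: "(\<Sum>i<n. r i * p i) = cmod S"
  proof -
    have "(\<Sum>i<n. r i * p i) = (\<Sum>i<n. Re (cnj e * a i))" by (simp only: rp)
    also have "\<dots> = Re (cnj e * S)" by (simp only: S_def sum_distrib_left Re_sum)
    also have "\<dots> = cmod S" by (rule eS)
    finally show ?thesis .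
  qed
  have sum_r2p: "(\<Sum>i<n. (r i)^2 * p i) = 0"
  proof -
    have "(\<Sum>i<n. (r i)^2 * p i) = (\<Sum>i<n. Re (cnj e * (complex_of_real (r i) * a i)))"
    proof (intro sum.cong refl)
      fix i
      have "(r i)^2 * p i = r i * Re (cnj e * a i)" by (simp only: power2_eq_square rp[symmetric] mult.assoc)
      also have "\<dots> = Re (complex_of_real (r i) * (cnj e * a i))" by simp
      also have "complex_of_real (r i) * (cnj e * a i) = cnj e * (complex_of_real (r i) * a i)" by (simp only: ac_simps)
      finally show "(r i)^2 * p i = Re (cnj e * (complex_of_real (r i) * a i))" .
    qed
    also have "\<dots> = Re (cnj e * (\<Sum>i<n. (w i)^2))"
      by (simp only: raw Re_sum sum_distrib_left)
    finally show ?thesis using sumw2 by simp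
  qed
  have c1: "(R + cmod S)^2 \<le> (real n + (\<Sum>i<n. p i)) * 2"
  proof -
    have "(\<Sum>i<n. (1 + p i) * r i)^2 \<le> (\<Sum>i<n. 1 + p i) * (\<Sum>i<n. (1 + p i) * (r i)^2)"
      by (intro wcauchy) (simp_all add: pb1 pb2 pb3)
    moreover have "(\<Sum>i<n. (1 + p i) * r i) = (\<Sum>i<n. r i + r i * p i)"
      by (intro sum.cong refl) (simp add: algebra_simps)
    moreover have "(\<Sum>i<n. r i + r i * p i) = R + cmod S"
      by (simp only: sum.distrib R_def sum_rp)
    moreover have "(\<Sum>i<n. (1 + p i) * (r i)^2) = (\<Sum>i<n. (r i)^2 + (r i)^2 * p i)"
      by (intro sum.cong refl) (simp add: algebra_simps)
    moreover have "(\<Sum>i<n. (r i)^2 + (r i)^2 * p i) = 2"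
      by (simp only: sum.distrib sumr2 sum_r2p)
    moreover have "(\<Sum>i<n. 1 + p i) = real n + (\<Sum>i<n. p i)" by (simp add: sum.distrib)
    ultimately show ?thesis by simp
  qed
  have c2: "(R - cmod S)^2 \<le> (real n - (\<Sum>i<n. p i)) * 2"
  proof -
    have "(\<Sum>i<n. (1 - p i) * r i)^2 \<le> (\<Sum>i<n. 1 - p i) * (\<Sum>i<n. (1 - p i) * (r i)^2)"
      by (intro wcauchy) (simp_all add: pb1 pb2 pb3)
    moreover have "(\<Sum>i<n. (1 - p i) * r i) = (\<Sum>i<n. r i - r i * p i)"
      by (intro sum.cong refl) (simp add: algebra_simps)
    moreover have "(\<Sum>i<n. r i - r i * p i) = R - cmod S"
      by (simp only: sum_subtractf R_def sum_rp)
    moreover have "(\<Sum>i<n. (1 - p i) * (r i)^2) = (\<Sum>i<n. (r i)^2 - (r i)^2 * p i)"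
      by (intro sum.cong refl) (simp add: algebra_simps)
    moreover have "(\<Sum>i<n. (r i)^2 - (r i)^2 * p i) = 2"
      by (simp only: sum_subtractf sumr2 sum_r2p diff_zero)
    moreover have "(\<Sum>i<n. 1 - p i) = real n - (\<Sum>i<n. p i)" by (simp add: sum_subtractf)
    ultimately show ?thesis by simp
  qed
  have RS: "R^2 + (cmod S)^2 \<le> 2 * real n"
  proof -
    have q1: "(R + cmod S)^2 + (R - cmod S)^2 = 2*(R^2 + (cmod S)^2)" by (simp add: power2_eq_square algebra_simps)
    have q2: "(real n + (\<Sum>i<n. p i)) * 2 + (real n - (\<Sum>i<n. p i)) * 2 = 4 * real n"
      by (simp add: algebra_simps)
    have "(R + cmod S)^2 + (R - cmod S)^2 \<le> (real n + (\<Sum>i<n. p i)) * 2 + (real n - (\<Sum>i<n. p i)) * 2"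
      using c1 c2 by (rule add_mono)
    then have "2*(R^2 + (cmod S)^2) \<le> 4 * real n" unfolding q1 q2 .
    then show ?thesis by simp
  qed
  have T0: "0 \<le> (cmod T)^2" by simp
  have S0: "0 \<le> (cmod S)^2" by simp
  have abs_bound: "(\<Sum>i<n. \<Sum>j<n. \<bar>t i j\<bar>) \<le> 4 * real n / 3"
    using sumabs RS T0 S0 by linarith
  have "(\<Sum>i<n. \<Sum>j<n. (t i j - \<bar>t i j\<bar>) / 2) \<le> (\<Sum>i<n. \<Sum>j<n. M i j * t i j)"
    by (intro sum_mono step1)
  moreover have "(\<Sum>i<n. \<Sum>j<n. (t i j - \<bar>t i j\<bar>) / 2) = ((\<Sum>i<n. \<Sum>j<n. t i j) - (\<Sum>i<n. \<Sum>j<n. \<bar>t i j\<bar>)) / 2"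
    by (simp only: sum_divide_distrib[symmetric] sum_subtractf)
  moreover have "0 \<le> (\<Sum>i<n. \<Sum>j<n. t i j)" unfolding sumt by simp
  ultimately have "- 2 * real n / 3 \<le> (\<Sum>i<n. \<Sum>j<n. M i j * t i j)" using abs_bound
    by (rule fin_arith)
  then show ?thesis by (simp add: t_def)
qed


lemma two_vec:
  fixes M :: "nat \<Rightarrow> nat \<Rightarrow> real" and X Y :: "nat \<Rightarrow> real"
  assumes M0: "\<And>i j. 0 \<le> M i j" and M1: "\<And>i j. M i j \<le> 1"
    and E0: "\<And>i. i < n \<Longrightarrow> (\<Sum>k<n. M i k * X k) = \<beta> * X i"
    and E1: "\<And>i. i < n \<Longrightarrow> (\<Sum>k<n. M i k * Y k) = \<gamma> * X i + \<alpha> * Y i"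
    and X0: "\<exists>i<n. X i \<noteq> 0" and Yind: "\<And>c. \<exists>i<n. Y i \<noteq> c * X i"
  shows "- 2 * real n / 3 \<le> \<alpha> + \<beta>"
proof -
  define nX where "nX = (\<Sum>i<n. (X i)^2)"
  have nXpos: "0 < nX"
  proof -
    obtain i where i: "i < n" "X i \<noteq> 0" using X0 by blast
    have "(X i)^2 \<le> nX" unfolding nX_def using i by (intro member_le_sum) auto
    moreover have "0 < (X i)^2" using i by simp
    ultimately show ?thesis by linarith
  qed
  define c where "c = (\<Sum>i<n. X i * Y i) / nX"
  define V where "V i = Y i - c * X i" for i
  define nV where "nV = (\<Sum>i<n. (V i)^2)"
  have XV: "(\<Sum>i<n. X i * V i) = 0"
  proof -
    have "(\<Sum>i<n. X i * V i) = (\<Sum>i<n. X i * Y i) - c * nX"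
      by (simp add: V_def nX_def algebra_simps sum_subtractf sum_distrib_left power2_eq_square)
    also have "\<dots> = 0" using nXpos by (simp add: c_def)
    finally show ?thesis .
  qed
  have nVpos: "0 < nV"
  proof -
    obtain i where i: "i < n" "Y i \<noteq> c * X i" using Yind by blast
    have "(V i)^2 \<le> nV" unfolding nV_def using i by (intro member_le_sum) auto
    moreover have "0 < (V i)^2" using i by (simp add: V_def)
    ultimately show ?thesis by linarith
  qed
  define x where "x i = X i / sqrt nX" for i
  define y where "y i = V i / sqrt nV" for i
  have nx: "(\<Sum>i<n. (x i)^2) = 1"
    using nXpos by (simp add: x_def power_divide sum_divide_distrib[symmetric] nX_def[symmetric])
  have ny: "(\<Sum>i<n. (y i)^2) = 1"
    using nVpos by (simp add: y_def power_divide sum_divide_distrib[symmetric] nV_def[symmetric])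
  have nxy: "(\<Sum>i<n. x i * y i) = 0"
  proof -
    have "(\<Sum>i<n. x i * y i) = (\<Sum>i<n. X i * V i) / (sqrt nX * sqrt nV)"
      by (simp add: x_def y_def sum_divide_distrib)
    then show ?thesis using XV by simp
  qed
  have K: "- 2 * real n / 3 \<le> (\<Sum>i<n. \<Sum>j<n. M i j * (x i * x j + y i * y j))"
    by (rule key2[OF M0 M1 nx ny nxy])
  have Qx: "(\<Sum>i<n. \<Sum>j<n. M i j * (x i * x j)) = \<beta>"
  proof -
    have "(\<Sum>i<n. \<Sum>j<n. M i j * (x i * x j)) = (\<Sum>i<n. x i * ((\<Sum>j<n. M i j * X j) / sqrt nX))"
      by (simp add: x_def sum_distrib_left sum_divide_distrib algebra_simps)
    also have "\<dots> = (\<Sum>i<n. \<beta> * (x i)^2)"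
      by (intro sum.cong refl) (simp add: E0 x_def power2_eq_square)
    also have "\<dots> = \<beta>" using nx by (simp add: sum_distrib_left[symmetric])
    finally show ?thesis .
  qed
  have AV: "(\<Sum>k<n. M i k * V k) = \<alpha> * V i + (\<gamma> + c * \<alpha> - c * \<beta>) * X i" if "i < n" for i
  proof -
    have "(\<Sum>k<n. M i k * V k) = (\<Sum>k<n. M i k * Y k) - c * (\<Sum>k<n. M i k * X k)"
      by (simp add: V_def algebra_simps sum_subtractf sum_distrib_left)
    also have "\<dots> = \<alpha> * V i + (\<gamma> + c * \<alpha> - c * \<beta>) * X i"
      unfolding E0[OF that] E1[OF that] by (simp add: V_def algebra_simps)
    finally show ?thesis .
  qed
  have Qy: "(\<Sum>i<n. \<Sum>j<n. M i j * (y i * y j)) = \<alpha>"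
  proof -
    have "(\<Sum>i<n. \<Sum>j<n. M i j * (y i * y j)) = (\<Sum>i<n. y i * ((\<Sum>j<n. M i j * V j) / sqrt nV))"
      by (simp add: y_def sum_distrib_left sum_divide_distrib algebra_simps)
    also have "\<dots> = (\<Sum>i<n. \<alpha> * (y i)^2 + (\<gamma> + c * \<alpha> - c * \<beta>) / nV * (X i * V i))"
    proof (intro sum.cong refl)
      fix i assume "i \<in> {..<n}"
      hence i: "i < n" by simp
      have sq: "sqrt nV * sqrt nV = nV" using nVpos by simp
      show "y i * ((\<Sum>j<n. M i j * V j) / sqrt nV) = \<alpha> * (y i)^2 + (\<gamma> + c * \<alpha> - c * \<beta>) / nV * (X i * V i)"
        unfolding AV[OF i] using nVpos sq by (simp add: y_def power2_eq_square field_simps)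
    qed
    also have "\<dots> = \<alpha> * (\<Sum>i<n. (y i)^2) + (\<gamma> + c * \<alpha> - c * \<beta>) / nV * (\<Sum>i<n. X i * V i)"
      by (simp add: sum.distrib sum_distrib_left)
    also have "\<dots> = \<alpha>" using ny XV by simp
    finally show ?thesis .
  qed
  have "(\<Sum>i<n. \<Sum>j<n. M i j * (x i * x j + y i * y j))
      = (\<Sum>i<n. \<Sum>j<n. M i j * (x i * x j)) + (\<Sum>i<n. \<Sum>j<n. M i j * (y i * y j))"
    by (simp add: distrib_left sum.distrib)
  then show ?thesis using K Qx Qy by simp
qed

lemma mult_idx:
  fixes A B :: "'a :: comm_semiring_0 mat"
  assumes "A \<in> carrier_mat n m" "B \<in> carrier_mat m p" "i < n" "j < p"
  shows "(A * B) $$ (i, j) = (\<Sum>k<m. A $$ (i, k) * B $$ (k, j))"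
  using assms by (auto simp: scalar_prod_def lessThan_atLeast0 intro!: sum.cong)

lemma schur_two:
  fixes A :: "real mat"
  assumes A: "A \<in> carrier_mat n n" and n2: "2 \<le> n"
    and cp: "char_poly A = (\<Prod>e\<leftarrow>L. [:- e, 1:])"
  shows "\<exists>X Y \<gamma>. (\<forall>i<n. (\<Sum>k<n. A $$ (i,k) * X k) = L!0 * X i)
     \<and> (\<forall>i<n. (\<Sum>k<n. A $$ (i,k) * Y k) = \<gamma> * X i + L!1 * Y i)
     \<and> (\<exists>i<n. X i \<noteq> 0) \<and> (\<forall>c. \<exists>i<n. Y i \<noteq> c * X i)"
proof -
  obtain B P Q where sd: "schur_decomposition A L = (B,P,Q)"
    by (cases "schur_decomposition A L") auto
  from schur_decomposition[OF A cp sd] have sim: "similar_mat_wit A B P Q"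
    and ut: "upper_triangular B" and dg: "diag_mat B = L" by auto
  note sw = similar_mat_witD2[OF A sim]
  have B: "B \<in> carrier_mat n n" and P: "P \<in> carrier_mat n n" and Q: "Q \<in> carrier_mat n n"
    and QP: "Q * P = 1\<^sub>m n" and AE: "A = P * B * Q" using sw by auto
  have AP: "A * P = P * B"
  proof -
    have "A * P = P * B * Q * P" using AE by simp
    also have "\<dots> = P * (B * (Q * P))"
    proof -
      have BQ: "B * Q \<in> carrier_mat n n" using B Q by simp
      show ?thesis using assoc_mult_mat[OF P BQ P] assoc_mult_mat[OF B Q P] assoc_mult_mat[OF P B Q] by simp
    qed
    also have "\<dots> = P * B" using QP P B by simp
    finally show ?thesis .
  qed
  have L0: "L ! 0 = B $$ (0,0)" and L1: "L ! 1 = B $$ (1,1)"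
    using dg B n2 by (auto simp: diag_mat_def)
  have Bz: "B $$ (k, j) = 0" if "j < k" "k < n" for j k
    using ut that B by (auto intro: upper_triangularD)
  define X where "X k = P $$ (k, 0)" for k
  define Y where "Y k = P $$ (k, 1)" for k
  have E0: "(\<Sum>k<n. A $$ (i,k) * X k) = L!0 * X i" if i: "i < n" for i
  proof -
    have "(\<Sum>k<n. A $$ (i,k) * X k) = (A * P) $$ (i, 0)"
      unfolding X_def by (rule sym, rule mult_idx[OF A P i]) (use n2 in simp)
    also have "\<dots> = (P * B) $$ (i, 0)" by (simp add: AP)
    also have "\<dots> = (\<Sum>k<n. P $$ (i,k) * B $$ (k,0))" by (rule mult_idx[OF P B i]) (use n2 in simp)
    also have "\<dots> = (\<Sum>k<n. if k = 0 then P $$ (i,0) * B $$ (0,0) else 0)"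
      by (intro sum.cong refl) (auto simp: Bz)
    also have "\<dots> = L!0 * X i" using n2 by (simp add: L0 X_def)
    finally show ?thesis .
  qed
  have E1: "(\<Sum>k<n. A $$ (i,k) * Y k) = B $$ (0,1) * X i + L!1 * Y i" if i: "i < n" for i
  proof -
    have "(\<Sum>k<n. A $$ (i,k) * Y k) = (A * P) $$ (i, 1)"
      unfolding Y_def by (rule sym, rule mult_idx[OF A P i]) (use n2 in simp)
    also have "\<dots> = (P * B) $$ (i, 1)" by (simp add: AP)
    also have "\<dots> = (\<Sum>k<n. P $$ (i,k) * B $$ (k,1))" by (rule mult_idx[OF P B i]) (use n2 in simp)
    also have "\<dots> = (\<Sum>k<n. (if k = 0 then P $$ (i,0) * B $$ (0,1) else 0) + (if k = 1 then P $$ (i,1) * B $$ (1,1) else 0))"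
      by (intro sum.cong refl) (auto simp: Bz)
    also have "\<dots> = B $$ (0,1) * X i + L!1 * Y i" using n2 L1 by (simp add: sum.distrib X_def Y_def)
    finally show ?thesis .
  qed
  have QPi: "(\<Sum>k<n. Q $$ (j,k) * P $$ (k,l)) = (if j = l then 1 else 0)" if "j < n" "l < n" for j l
  proof -
    have "(\<Sum>k<n. Q $$ (j,k) * P $$ (k,l)) = (Q * P) $$ (j,l)" by (rule sym, rule mult_idx[OF Q P]) (use that in simp_all)
    also have "\<dots> = (if j = l then 1 else 0)" using that by (simp add: QP)
    finally show ?thesis .
  qed
  have X0: "\<exists>i<n. X i \<noteq> 0"
  proof (rule ccontr)
    assume "\<not> ?thesis"
    then have "\<forall>k<n. X k = 0" by auto
    then have "(\<Sum>k<n. Q $$ (0,k) * P $$ (k,0)) = 0" by (simp add: X_def)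
    moreover have "(\<Sum>k<n. Q $$ (0,k) * P $$ (k,0)) = 1" using QPi[of 0 0] n2 by simp
    ultimately show False by simp
  qed
  have Yind: "\<exists>i<n. Y i \<noteq> c * X i" for c
  proof (rule ccontr)
    assume "\<not> ?thesis"
    then have h: "\<forall>k<n. Y k = c * X k" by auto
    have "(\<Sum>k<n. Q $$ (1,k) * P $$ (k,1)) = (\<Sum>k<n. c * (Q $$ (1,k) * P $$ (k,0)))"
      using h by (intro sum.cong refl) (simp add: X_def Y_def)
    also have "\<dots> = c * (\<Sum>k<n. Q $$ (1,k) * P $$ (k,0))" by (simp add: sum_distrib_left)
    also have "\<dots> = 0" using QPi[of 1 0] n2 by simp
    finally show False using QPi[of 1 1] n2 by simp
  qed
  show ?thesis using E0 E1 X0 Yind by blast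
qed

theorem corollary2p2:
  fixes n :: nat and E :: "nat \<Rightarrow> nat \<Rightarrow> bool" and es :: "real list"
  assumes "n \<ge> 2"
    and "simple_graph n E"
    and "ordered_eigenvalues (adj_matrix n E) es"
  shows "es ! (n - 2) \<ge> - (real n / 3)"
proof -
  have n2: "2 \<le> n" using assms(1) .
  define A where "A = adj_matrix n E"
  have A: "A \<in> carrier_mat n n" by (simp add: A_def adj_matrix_def)
  have dA: "dim_row A = n" using A by simp
  from assms(3) have len: "length es = n" and srt: "sorted_wrt (\<ge>) es"
    and cp: "char_poly A = (\<Prod>e\<leftarrow>es. [:- e, 1:])"
    unfolding ordered_eigenvalues_def A_def[symmetric] dA by auto
  define L where "L = es ! (n - 1) # es ! (n - 2) # take (n - 2) es"
  have d1: "drop (n - 2) es = es ! (n - 2) # drop (n - 1) es"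
    using n2 len Cons_nth_drop_Suc[of "n - 2" es] by (simp add: Suc_diff_Suc numeral_2_eq_2)
  have d2: "drop (n - 1) es = [es ! (n - 1)]"
  proof -
    have s1: "Suc (n - 1) = n" using n2 by simp
    have lt: "n - 1 < length es" using n2 len by simp
    have dn: "drop n es = []" using len by simp
    have "drop (n - 1) es = es ! (n - 1) # drop (Suc (n - 1)) es" by (rule sym, rule Cons_nth_drop_Suc[OF lt])
    also have "\<dots> = [es ! (n - 1)]" unfolding s1 dn ..
    finally show ?thesis .
  qed
  have ms: "mset L = mset es"
  proof -
    have "mset es = mset (take (n - 2) es @ drop (n - 2) es)" by simp
    also have "\<dots> = mset L" unfolding d1 d2 L_def by simp
    finally show ?thesis by simp
  qed
  have "(\<Prod>e\<leftarrow>L. [:- e, 1:]) = (\<Prod>e\<leftarrow>es. [:- e, 1:])"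
    by (metis ms mset_map prod_mset_prod_list)
  with cp have cpL: "char_poly A = (\<Prod>e\<leftarrow>L. [:- e, 1:])" by simp
  obtain X Y \<gamma> where
      E0: "\<forall>i<n. (\<Sum>k<n. A $$ (i,k) * X k) = L!0 * X i"
    and E1: "\<forall>i<n. (\<Sum>k<n. A $$ (i,k) * Y k) = \<gamma> * X i + L!1 * Y i"
    and X0: "\<exists>i<n. X i \<noteq> 0" and Yind: "\<forall>c. \<exists>i<n. Y i \<noteq> c * X i"
    using schur_two[OF A n2 cpL] by blast
  define M where "M i j = (if E i j then 1 else 0 :: real)" for i j
  have AM: "A $$ (i,k) = M i k" if "i < n" "k < n" for i k
    using that by (simp add: A_def adj_matrix_def M_def)
  have L0: "L ! 0 = es ! (n - 1)" and L1: "L ! 1 = es ! (n - 2)" by (simp_all add: L_def)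
  have E0': "(\<Sum>k<n. M i k * X k) = es ! (n - 1) * X i" if "i < n" for i
  proof -
    have "(\<Sum>k<n. M i k * X k) = (\<Sum>k<n. A $$ (i,k) * X k)" using that by (intro sum.cong refl) (simp add: AM)
    then show ?thesis using E0 that L0 by simp
  qed
  have E1': "(\<Sum>k<n. M i k * Y k) = \<gamma> * X i + es ! (n - 2) * Y i" if "i < n" for i
  proof -
    have "(\<Sum>k<n. M i k * Y k) = (\<Sum>k<n. A $$ (i,k) * Y k)" using that by (intro sum.cong refl) (simp add: AM)
    then show ?thesis using E1 that L1 by simp
  qed
  have M0: "0 \<le> M i j" and M1: "M i j \<le> 1" for i j by (simp_all add: M_def)
  have sum2: "- 2 * real n / 3 \<le> es ! (n - 2) + es ! (n - 1)"
    using two_vec[where M=M and n=n and \<beta>="es ! (n - 1)" and X=X and \<gamma>=\<gamma> and \<alpha>="es ! (n - 2)" and Y=Y] M0 M1 E0' E1' X0 Yind by blast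
  have ord: "es ! (n - 1) \<le> es ! (n - 2)"
    using sorted_wrt_nth_less[OF srt, of "n - 2" "n - 1"] n2 len by simp
  show ?thesis using sum2 ord by linarith
qed

end
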